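(* Fix $K\in\mathbb{N}$, and let $O=\{A_1,\dots,A_n\}\in\Omega_{n,n+K}$. Then: (1) For every $i$, $|A_i|\leq K+1$. (2) $|\{i\in[n]: |A_i|\geq 2\}|\leq K$. (3) Fix $\mu\vdash 4K$ and let $n\geq 3K$. For every standard tableau $T$ of shape $\mu^{(n-3K)}$, the monomials $m_i:=\mathrm{Sub}^T_{(x,y)}(x_{A_i})$ (so that $\mathrm{Sub}^T_{(x,y)}(P_O)=P_n(m_1,\dots,m_n)$) satisfy: (i) $|m_i|\leq K+1$ for every $i$; (ii) $|\{i\in[n]:|m_i|\geq 2\}|\leq K$; (iii) $|\{i\in[n]: m_i\neq y_1\}|\leq 16K^2$.
   Context: $\Omega_{n,m}$ is the set of ordered partitions $O=\{A_1,\dots,A_n\}$ of $[m]=\{1,\dots,m\}$ into $n$ nonempty ordered lists $A_i$ whose underlying sets are pairwise disjoint with union $[m]$; $|A_i|$ is the length of $A_i$. For $A=[\![ab\cdots c]\!]$, $x_A=x_ax_b\cdots x_c$; $P_n(z_1,\dots,z_n)=\sum_{\sigma\in S_n}z_{\sigma(1)}\cdots z_{\sigma(n)}$ and $P_O=P_n(x_{A_1},\dots,x_{A_n})$. For $\nu=(\nu_1,\dots,\nu_r)$, $\nu^{(s)}=(\nu_1+s,\nu_2,\dots,\nu_r)$. A standard tableau $T$ of shape $\nu\vdash m$ is the Young diagram of $\nu$ filled with $1,\dots,m$ increasing along rows and columns; $\mathrm{Sub}^T_{(x,y)}$ is the algebra homomorphism $x_j\mapsto y_{i_j}$ into the free algebra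 on $Y=\{y_1,y_2,\dots\}$, $i_j$ being the row of $T$ containing $j$. $|m|$ denotes the length of a monomial $m$. *)

theory Defs
  imports Main
begin

definition Omega :: "nat \<Rightarrow> nat \<Rightarrow> nat list set set" where
  "Omega n m = {P. finite P \<and> card P = n \<and>
     (\<forall>A\<in>P. A \<noteq> [] \<and> distinct A) \<and>
     (\<forall>A\<in>P. \<forall>B\<in>P. A \<noteq> B \<longrightarrow> set A \<inter> set B = {}) \<and>
     (\<Union>A\<in>P. set A) = {1..m}}"

definition is_partition :: "nat list \<Rightarrow> nat \<Rightarrow> bool" where
  "is_partition \<nu> m \<longleftrightarrow> (\<forall>x\<in>set \<nu>. 0 < x) \<and> sorted_wrt (\<ge>) \<nu> \<and> sum_list \<nu> = m"

fun shift_part :: "nat list \<Rightarrow> nat \<Rightarrow> nat list" where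
  "shift_part [] s = [s]"
| "shift_part (a # r) s = (a + s) # r"

text \<open>Cells of the Young diagram (rows and columns 0-indexed).\<close>
definition cells :: "nat list \<Rightarrow> (nat \<times> nat) set" where
  "cells \<nu> = {(r, c). r < length \<nu> \<and> c < \<nu> ! r}"

definition standard_tableau :: "nat list \<Rightarrow> nat \<Rightarrow> (nat \<times> nat \<Rightarrow> nat) \<Rightarrow> bool" where
  "standard_tableau \<nu> m T \<longleftrightarrow> bij_betw T (cells \<nu>) {1..m} \<and>
     (\<forall>r c. (r, c) \<in> cells \<nu> \<longrightarrow> (r, Suc c) \<in> cells \<nu> \<longrightarrow> T (r, c) < T (r, Suc c)) \<and>
     (\<forall>r c. (r, c) \<in> cells \<nu> \<longrightarrow> (Suc r, c) \<in> cells \<nu> \<longrightarrow> T (r, c) < T (Suc r, c))"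

text \<open>Row (1-indexed) of T containing j; letter y_i is represented by i.\<close>
definition tab_row :: "nat list \<Rightarrow> (nat \<times> nat \<Rightarrow> nat) \<Rightarrow> nat \<Rightarrow> nat" where
  "tab_row \<nu> T j = Suc (fst (THE p. p \<in> cells \<nu> \<and> T p = j))"

text \<open>Sub^T_(x,y)(x_A): monomials of the free algebra are words (lists of letters).\<close>
definition sub_word :: "nat list \<Rightarrow> (nat \<times> nat \<Rightarrow> nat) \<Rightarrow> nat list \<Rightarrow> nat list" where
  "sub_word \<nu> T A = map (tab_row \<nu> T) A"

end

theory Submission
  imports Defs
begin

lemma omega_sum:
  assumes "OP \<in> Omega n (n + K)"
  shows "finite OP" "card OP = n" "(\<Sum>A\<in>OP. length A - 1) = K"
    "\<And>A. A \<in> OP \<Longrightarrow> A \<noteq> []"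
proof -
  have f: "finite OP" and c: "card OP = n" and ne: "\<And>A. A\<in>OP \<Longrightarrow> A \<noteq> [] \<and> distinct A"
    and dj: "\<And>A B. A\<in>OP \<Longrightarrow> B\<in>OP \<Longrightarrow> A \<noteq> B \<Longrightarrow> set A \<inter> set B = {}"
    and un: "(\<Union>A\<in>OP. set A) = {1..n+K}"
    using assms unfolding Omega_def by auto
  show "finite OP" "card OP = n" using f c by auto
  show "\<And>A. A \<in> OP \<Longrightarrow> A \<noteq> []" using ne by auto
  have "card (\<Union>A\<in>OP. set A) = (\<Sum>A\<in>OP. card (set A))"
    by (rule card_UN_disjoint) (use f dj in auto)
  also have "\<dots> = (\<Sum>A\<in>OP. length A)"
    by (rule sum.cong) (auto dest: ne simp: distinct_card)
  finally have s: "(\<Sum>A\<in>OP. length A) = n + K" using un by simp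
  have "(\<Sum>A\<in>OP. length A) = (\<Sum>A\<in>OP. (length A - 1) + 1)"
    by (rule sum.cong) (auto dest: ne)
  also have "\<dots> = (\<Sum>A\<in>OP. length A - 1) + n" using c by (simp add: sum.distrib del: Suc_pred One_nat_def)
  finally show "(\<Sum>A\<in>OP. length A - 1) = K" using s by simp
qed

lemma parts12:
  assumes "OP \<in> Omega n (n + K)"
  shows "(\<forall>A\<in>OP. length A \<le> K + 1) \<and> card {A \<in> OP. 2 \<le> length A} \<le> K"
proof -
  note o = omega_sum[OF assms]
  have 1: "\<forall>A\<in>OP. length A \<le> K + 1"
  proof
    fix A assume "A \<in> OP"
    then have "length A - 1 \<le> (\<Sum>A\<in>OP. length A - 1)"
      using o(1) by (intro member_le_sum) auto
    then show "length A \<le> K + 1" using o(3) by simp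
  qed
  have "card {A \<in> OP. 2 \<le> length A} = (\<Sum>A\<in>{A \<in> OP. 2 \<le> length A}. 1)" by simp
  also have "\<dots> \<le> (\<Sum>A\<in>{A \<in> OP. 2 \<le> length A}. length A - 1)"
    by (rule sum_mono) auto
  also have "\<dots> \<le> (\<Sum>A\<in>OP. length A - 1)"
    by (rule sum_mono2) (use o(1) in auto)
  finally show ?thesis using 1 o(3) by simp
qed

lemma tab_row_T:
  assumes "inj_on T (cells \<nu>)" "p \<in> cells \<nu>"
  shows "tab_row \<nu> T (T p) = Suc (fst p)"
proof -
  have "(THE q. q \<in> cells \<nu> \<and> T q = T p) = p"
    by (rule the_equality) (use assms in \<open>auto dest: inj_onD\<close>)
  then show ?thesis unfolding tab_row_def by simp
qed

theorem proposition4p28: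
  fixes K n :: nat and OP :: "nat list set"
  assumes "OP \<in> Omega n (n + K)"
  shows "(\<forall>A\<in>OP. length A \<le> K + 1)
    \<and> card {A \<in> OP. 2 \<le> length A} \<le> K
    \<and> (\<forall>\<mu> T. is_partition \<mu> (4 * K) \<longrightarrow> 3 * K \<le> n \<longrightarrow>
          standard_tableau (shift_part \<mu> (n - 3 * K)) (n + K) T \<longrightarrow>
            (\<forall>A\<in>OP. length (sub_word (shift_part \<mu> (n - 3 * K)) T A) \<le> K + 1)
          \<and> card {A \<in> OP. 2 \<le> length (sub_word (shift_part \<mu> (n - 3 * K)) T A)} \<le> K
          \<and> card {A \<in> OP. sub_word (shift_part \<mu> (n - 3 * K)) T A \<noteq> [1]} \<le> 16 * K ^ 2)"
proof -
  note p12 = parts12[OF assms]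
  note o = omega_sum[OF assms]
  have dj: "\<And>A B. A\<in>OP \<Longrightarrow> B\<in>OP \<Longrightarrow> A \<noteq> B \<Longrightarrow> set A \<inter> set B = {}"
    and un: "(\<Union>A\<in>OP. set A) = {1..n+K}"
    using assms unfolding Omega_def by auto
  have main: "card {A \<in> OP. sub_word (shift_part \<mu> (n - 3 * K)) T A \<noteq> [1]} \<le> 16 * K ^ 2"
    if mu: "is_partition \<mu> (4 * K)" and nK: "3 * K \<le> n"
      and st: "standard_tableau (shift_part \<mu> (n - 3 * K)) (n + K) T" for \<mu> T
  proof -
    define \<nu> where "\<nu> = shift_part \<mu> (n - 3 * K)"
    have bij: "bij_betw T (cells \<nu>) {1..n+K}" using st unfolding standard_tableau_def \<nu>_def by auto
    have inj: "inj_on T (cells \<nu>)" and img: "T ` cells \<nu> = {1..n+K}"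
      using bij by (auto simp: bij_betw_def)
    have fc: "finite (cells \<nu>)" using inj img by (metis finite_atLeastAtMost finite_imageD)
    have cc: "card (cells \<nu>) = n + K" using bij by (simp add: bij_betw_same_card)
    have len: "length \<nu> > 0" unfolding \<nu>_def by (cases \<mu>) auto
    have r0: "\<nu> ! 0 \<ge> n - 3 * K" unfolding \<nu>_def by (cases \<mu>) auto
    define C1 where "C1 = {(r::nat, c). r = 0 \<and> c < \<nu> ! 0}"
    define C2 where "C2 = cells \<nu> \<inter> {p. fst p \<noteq> 0}"
    have C1s: "C1 \<subseteq> cells \<nu>" using len unfolding C1_def cells_def by auto
    have "C1 = (\<lambda>c. (0, c)) ` {..<\<nu> ! 0}" unfolding C1_def by auto
    then have cC1: "card C1 = \<nu> ! 0" by (simp add: card_image inj_on_def)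
    have "C2 = cells \<nu> - C1" unfolding C2_def C1_def cells_def by auto
    then have cC2: "card C2 = n + K - \<nu> ! 0" using card_Diff_subset[OF finite_subset[OF C1s fc] C1s] cc cC1 by simp
    then have cC2': "card C2 \<le> 4 * K" using r0 nK by simp
    define S where "S = {A \<in> OP. sub_word \<nu> T A \<noteq> [1]}"
    have "S \<subseteq> {A \<in> OP. 2 \<le> length A} \<union> {A \<in> OP. length A = 1 \<and> sub_word \<nu> T A \<noteq> [1]}"
    proof
      fix A assume A: "A \<in> S"
      then have "A \<in> OP" "sub_word \<nu> T A \<noteq> [1]" unfolding S_def by auto
      moreover have "length A = 1 \<or> 2 \<le> length A" using o(4)[OF \<open>A \<in> OP\<close>]
        by (cases A) (auto simp: Suc_le_eq)
      ultimately show "A \<in> {A \<in> OP. 2 \<le> length A} \<union> {A \<in> OP. length A = 1 \<and> sub_word \<nu> T A \<noteq> [1]}"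
        by blast
    qed
    moreover have "finite ({A \<in> OP. 2 \<le> length A} \<union> {A \<in> OP. length A = 1 \<and> sub_word \<nu> T A \<noteq> [1]})"
      using o(1) by simp
    ultimately have "card S \<le> card ({A \<in> OP. 2 \<le> length A} \<union> {A \<in> OP. length A = 1 \<and> sub_word \<nu> T A \<noteq> [1]})"
      by (rule card_mono[rotated])
    also have "\<dots> \<le> card {A \<in> OP. 2 \<le> length A} + card {A \<in> OP. length A = 1 \<and> sub_word \<nu> T A \<noteq> [1]}"
      by (rule card_Un_le)
    finally have cS: "card S \<le> card {A \<in> OP. 2 \<le> length A} + card {A \<in> OP. length A = 1 \<and> sub_word \<nu> T A \<noteq> [1]}" .
    moreover have "card {A \<in> OP. length A = 1 \<and> sub_word \<nu> T A \<noteq> [1]} \<le> card C2"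
    proof -
      let ?S1 = "{A \<in> OP. length A = 1 \<and> sub_word \<nu> T A \<noteq> [1]}"
      have injh: "inj_on hd ?S1"
      proof (rule inj_onI)
        fix A B assume A: "A \<in> ?S1" and B: "B \<in> ?S1" and h: "hd A = hd B"
        have "A \<noteq> []" "B \<noteq> []" using A B by auto
        then have "hd A \<in> set A \<inter> set B" using h hd_in_set by (metis IntI)
        then show "A = B" using dj A B by blast
      qed
      have "hd ` ?S1 \<subseteq> T ` C2"
      proof
        fix j assume "j \<in> hd ` ?S1"
        then obtain A where A: "A \<in> OP" "length A = 1" "sub_word \<nu> T A \<noteq> [1]" "j = hd A" by auto
        then obtain a where a: "A = [a]" by (cases A) auto
        have "j \<in> (\<Union>A\<in>OP. set A)" using A(1,4) a by (intro UN_I[of A]) auto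
        then have "j \<in> {1..n+K}" using un by simp
        then obtain p where p: "p \<in> cells \<nu>" "T p = j" using img by (metis imageE)
        have "tab_row \<nu> T j \<noteq> 1" using A a by (simp add: sub_word_def)
        then have "fst p \<noteq> 0" using tab_row_T[OF inj p(1)] p by simp
        then show "j \<in> T ` C2" using p unfolding C2_def by auto
      qed
      then have "card (hd ` ?S1) \<le> card (T ` C2)"
        by (rule card_mono[rotated]) (use fc C2_def in auto)
      also have "\<dots> \<le> card C2" by (rule card_image_le) (use fc C2_def in auto)
      finally show ?thesis using card_image[OF injh] by simp
    qed
    ultimately have "card S \<le> K + 4 * K" using cS p12 cC2' by linarith
    moreover have "K + 4 * K \<le> 16 * K ^ 2" by (cases K) (auto simp: power2_eq_square)
    ultimately show ?thesis unfolding S_def \<nu>_def by linarith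
  qed
  have lw: "length (sub_word \<nu> T A) = length A" for \<nu> T A by (simp add: sub_word_def)
  show ?thesis using p12 main by (simp add: lw)
qed

end
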